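(* Let $A\in\mathbb{R}^{n\times n}$, $B\in\mathbb{R}^n$ with $(A,B)$ controllable, $n\ge2$, and $\mathcal{C}=(B\;AB\;\cdots\;A^{n-1}B)$. For $k=1,\dots,n-1$ let $\mathrm{an}_k\in\mathbb{R}^{(n-k)\times(n-k+1)}$ have full row rank, with $\mathrm{an}_kB_{k-1}=0$, where $B_0=B$ and $B_k=\mathrm{an}_k\cdots\mathrm{an}_1A^kB$. Then $B_{n-1}$ is a nonzero real number and $$e_n^T\mathcal{C}^{-1}=\frac{1}{B_{n-1}}\,\mathrm{an}_{n-1}\mathrm{an}_{n-2}\cdots\mathrm{an}_2\mathrm{an}_1 .$$
   Context: $e_n$ is the $n$-th canonical basis vector of $\mathbb{R}^n$. *)

theory Defs
  imports "Jordan_Normal_Form.Jordan_Normal_Form" "Jordan_Normal_Form.DL_Rank"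
begin

definition ctrb_mat :: "nat \<Rightarrow> real mat \<Rightarrow> real vec \<Rightarrow> real mat" where
  "ctrb_mat n A b = mat_of_cols n (map (\<lambda>m. (A ^\<^sub>m m) *\<^sub>v b) [0..<n])"

definition controllable :: "nat \<Rightarrow> real mat \<Rightarrow> real vec \<Rightarrow> bool" where
  "controllable n A b \<longleftrightarrow> vec_space.rank n (ctrb_mat n A b) = n"

definition full_row_rank :: "real mat \<Rightarrow> bool" where
  "full_row_rank M \<longleftrightarrow> vec_space.rank (dim_row M) M = dim_row M"

fun an_prod :: "nat \<Rightarrow> (nat \<Rightarrow> real mat) \<Rightarrow> nat \<Rightarrow> real mat" where
  "an_prod n an 0 = 1\<^sub>m n"
| "an_prod n an (Suc k) = an (Suc k) * an_prod n an k"

definition Bk :: "nat \<Rightarrow> real mat \<Rightarrow> real vec \<Rightarrow> (nat \<Rightarrow> real mat) \<Rightarrow> nat \<Rightarrow> real vec" where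
  "Bk n A b an k = an_prod n an k *\<^sub>v ((A ^\<^sub>m k) *\<^sub>v b)"

end

theory Submission
  imports Defs
begin

context vec_space begin
lemma full_rank_span:
  assumes M: "M \<in> carrier_mat n nc" and rk: "rank M = n"
  shows "span (set (cols M)) = carrier_vec n"
proof -
  let ?W = "span (set (cols M))"
  have S: "set (cols M) \<subseteq> carrier_vec n" using M cols_dim by blast
  have sub: "subspace class_ring ?W V" using span_is_subspace S by simp
  have subm: "submodule class_ring ?W V" using span_is_submodule S by simp
  have vsW: "vectorspace class_ring (vs ?W)" using subspace_is_vs sub by blast
  have fd: "vectorspace.fin_dim class_ring (vs ?W)" using fin_dim_span_cols M by blast
  obtain \<beta> where b: "finite \<beta>" "vectorspace.basis class_ring (vs ?W) \<beta>"
    using vectorspace.finite_basis_exists[OF vsW fd] by blast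
  have "vectorspace.dim class_ring (vs ?W) = n" using rk unfolding rank_def by simp
  then have card: "card \<beta> = n" using vectorspace.dim_basis[OF vsW b] by simp
  have bW: "\<beta> \<subseteq> ?W" and liW: "LinearCombinations.module.lin_indpt class_ring (vs ?W) \<beta>"
    using b(2) vectorspace.basis_def[OF vsW] by auto
  have li: "lin_indpt \<beta>" using span_li_not_depend(2)[OF bW subm] liW by simp
  have bc: "\<beta> \<subseteq> carrier_vec n" using bW span_is_subset2[OF S] by auto
  have "basis \<beta>" by (rule dim_li_is_basis) (use b(1) bc li card dim_is_n in auto)
  then have "span \<beta> = carrier_vec n" unfolding basis_def by simp
  moreover have "span \<beta> \<subseteq> ?W" using span_is_subset[OF bW subm] .
  ultimately show ?thesis using span_is_subset2[OF S] by auto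
qed
end

lemma full_row_rank_surj:
  assumes M: "M \<in> carrier_mat r c" and rk: "full_row_rank M" and y: "y \<in> carrier_vec r"
  shows "\<exists>x \<in> carrier_vec c. M *\<^sub>v x = y"
proof -
  interpret vs: vec_space "TYPE(real)" r .
  have "vs.rank M = r" using rk M unfolding full_row_rank_def by simp
  then have "vs.span (set (cols M)) = carrier_vec r" 
    using vs.full_rank_span[OF M] by blast
  then show ?thesis using vs.col_space_eq[OF M] y M unfolding vs.col_space_def
    by auto
qed

lemma an_prod_carrier:
  assumes "\<forall>k \<in> {1..n-1}. an k \<in> carrier_mat (n - k) (n - k + 1)"
  shows "k \<le> n - 1 \<Longrightarrow> an_prod n an k \<in> carrier_mat (n - k) n"
proof (induction k)
  case 0 then show ?case by simp
next
  case (Suc k)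
  then have "an (Suc k) \<in> carrier_mat (n - Suc k) (n - k)" using assms
    by (metis Suc_diff_Suc Suc_eq_plus1 atLeastAtMost_iff le_add2 less_le_trans
        Suc_le_lessD le_eq_less_or_eq plus_1_eq_Suc diff_less_Suc less_Suc_eq_le)
  then show ?case using Suc by simp
qed

lemma an_prod_surj:
  assumes "\<forall>k \<in> {1..n-1}. an k \<in> carrier_mat (n - k) (n - k + 1)"
    and "\<forall>k \<in> {1..n-1}. full_row_rank (an k)"
  shows "k \<le> n - 1 \<Longrightarrow> \<forall>y \<in> carrier_vec (n - k). \<exists>x \<in> carrier_vec n. an_prod n an k *\<^sub>v x = y"
proof (induction k)
  case 0 then show ?case by auto
next
  case (Suc k)
  have kk: "Suc k \<in> {1..n-1}" using Suc by auto
  have "an (Suc k) \<in> carrier_mat (n - Suc k) (n - Suc k + 1)" using assms(1) kk by blast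
  moreover have "n - Suc k + 1 = n - k" using Suc by arith
  ultimately have A: "an (Suc k) \<in> carrier_mat (n - Suc k) (n - k)" by simp
  have fr: "full_row_rank (an (Suc k))" using assms(2) kk by auto
  have P: "an_prod n an k \<in> carrier_mat (n - k) n" using an_prod_carrier[OF assms(1)] Suc by auto
  show ?case
  proof
    fix y :: "real vec" assume y: "y \<in> carrier_vec (n - Suc k)"
    obtain z where z: "z \<in> carrier_vec (n - k)" "an (Suc k) *\<^sub>v z = y"
      using full_row_rank_surj[OF A fr y] by blast
    obtain x where x: "x \<in> carrier_vec n" "an_prod n an k *\<^sub>v x = z"
      using Suc z by auto
    have "an_prod n an (Suc k) *\<^sub>v x = an (Suc k) *\<^sub>v (an_prod n an k *\<^sub>v x)"
      using assoc_mult_mat_vec[OF A P x(1)] by simp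
    then show "\<exists>x \<in> carrier_vec n. an_prod n an (Suc k) *\<^sub>v x = y" using x z by auto
  qed
qed

lemma an_prod_zero:
  assumes A: "A \<in> carrier_mat n n" and b: "b \<in> carrier_vec n"
    and "\<forall>k \<in> {1..n-1}. an k \<in> carrier_mat (n - k) (n - k + 1)"
    and "\<forall>k \<in> {1..n-1}. an k *\<^sub>v Bk n A b an (k - 1) = 0\<^sub>v (n - k)"
  shows "k \<le> n - 1 \<Longrightarrow> \<forall>j < k. an_prod n an k *\<^sub>v ((A ^\<^sub>m j) *\<^sub>v b) = 0\<^sub>v (n - k)"
proof (induction k)
  case 0 then show ?case by auto
next
  case (Suc k)
  have kk: "Suc k \<in> {1..n-1}" using Suc by auto
  have "an (Suc k) \<in> carrier_mat (n - Suc k) (n - Suc k + 1)" using assms(3) kk by blast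
  moreover have "n - Suc k + 1 = n - k" using Suc by arith
  ultimately have An: "an (Suc k) \<in> carrier_mat (n - Suc k) (n - k)" by simp
  have P: "an_prod n an k \<in> carrier_mat (n - k) n" using an_prod_carrier[OF assms(3)] Suc by auto
  show ?case
  proof (intro allI impI)
    fix j assume j: "j < Suc k"
    have v: "(A ^\<^sub>m j) *\<^sub>v b \<in> carrier_vec n" using A b by (metis mult_mat_vec_carrier pow_carrier_mat)
    have eq: "an_prod n an (Suc k) *\<^sub>v ((A ^\<^sub>m j) *\<^sub>v b) = an (Suc k) *\<^sub>v (an_prod n an k *\<^sub>v ((A ^\<^sub>m j) *\<^sub>v b))"
      using assoc_mult_mat_vec[OF An P v] by simp
    show "an_prod n an (Suc k) *\<^sub>v ((A ^\<^sub>m j) *\<^sub>v b) = 0\<^sub>v (n - Suc k)"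
    proof (cases "j < k")
      case True
      then show ?thesis using Suc eq An by auto
    next
      case False
      then have "j = k" using j by auto
      have "an (Suc k) *\<^sub>v Bk n A b an (Suc k - 1) = 0\<^sub>v (n - Suc k)" using assms(4) kk by blast
      then show ?thesis using eq \<open>j = k\<close> unfolding Bk_def by simp
    qed
  qed
qed


theorem mainTheorem13:
  fixes n :: nat and A :: "real mat" and b :: "real vec" and an :: "nat \<Rightarrow> real mat"
  assumes "n \<ge> 2"
    and "A \<in> carrier_mat n n" and "b \<in> carrier_vec n"
    and "controllable n A b"
    and "\<forall>k \<in> {1..n-1}. an k \<in> carrier_mat (n - k) (n - k + 1)"
    and "\<forall>k \<in> {1..n-1}. full_row_rank (an k)"
    and "\<forall>k \<in> {1..n-1}. an k *\<^sub>v Bk n A b an (k - 1) = 0\<^sub>v (n - k)"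
  shows "Bk n A b an (n - 1) \<in> carrier_vec 1 \<and> Bk n A b an (n - 1) $ 0 \<noteq> 0 \<and>
    (\<forall>Ci \<in> carrier_mat n n. inverts_mat (ctrb_mat n A b) Ci \<longrightarrow>
       mat_of_rows n [unit_vec n (n - 1)] * Ci
         = (1 / (Bk n A b an (n - 1) $ 0)) \<cdot>\<^sub>m an_prod n an (n - 1))"
proof -
  note An = assms(2) and bn = assms(3)
  define P where "P = an_prod n an (n - 1)"
  define C where "C = ctrb_mat n A b"
  define E :: "real mat" where "E = mat_of_rows n [unit_vec n (n - 1)]"
  define \<beta> where "\<beta> = Bk n A b an (n - 1) $ 0"
  have n1: "n - (n - 1) = 1" using assms(1) by simp
  have P: "P \<in> carrier_mat 1 n" using an_prod_carrier[OF assms(5), of "n-1"] n1 unfolding P_def by simp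
  have vj: "\<And>j. (A ^\<^sub>m j) *\<^sub>v b \<in> carrier_vec n" using An bn by (metis mult_mat_vec_carrier pow_carrier_mat)
  have Bkc: "Bk n A b an (n - 1) \<in> carrier_vec 1" unfolding Bk_def using P P_def vj by auto
  have C: "C \<in> carrier_mat n n" unfolding C_def ctrb_mat_def by auto
  have colC: "\<And>j. j < n \<Longrightarrow> col C j = (A ^\<^sub>m j) *\<^sub>v b"
    unfolding C_def ctrb_mat_def using vj by (subst col_mat_of_cols) auto
  have E: "E \<in> carrier_mat 1 n" unfolding E_def by auto
  have zero: "\<forall>j < n - 1. P *\<^sub>v ((A ^\<^sub>m j) *\<^sub>v b) = 0\<^sub>v 1"
    using an_prod_zero[OF An bn assms(5) assms(7), of "n-1"] n1 unfolding P_def by simp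
  have PC: "P * C = \<beta> \<cdot>\<^sub>m E"
  proof (rule eq_matI)
    fix i j assume i: "i < dim_row (\<beta> \<cdot>\<^sub>m E)" and j: "j < dim_col (\<beta> \<cdot>\<^sub>m E)"
    then have i0: "i = 0" and jn: "j < n" using E by auto
    have "(P * C) $$ (i, j) = col (P * C) j $ i" using P C i0 jn by auto
    also have "\<dots> = (P *\<^sub>v ((A ^\<^sub>m j) *\<^sub>v b)) $ 0" using col_mult2[OF P C jn] colC[OF jn] i0 by simp
    also have "\<dots> = (\<beta> \<cdot>\<^sub>m E) $$ (i, j)"
    proof (cases "j < n - 1")
      case True
      then show ?thesis using zero i0 jn E unfolding E_def by (auto simp: mat_of_rows_index)
    next
      case False
      then have "j = n - 1" using jn by auto
      then show ?thesis using i0 jn E unfolding E_def \<beta>_def Bk_def P_def by (auto simp: mat_of_rows_index)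
    qed
    finally show "(P * C) $$ (i, j) = (\<beta> \<cdot>\<^sub>m E) $$ (i, j)" .
  qed (use P C E in auto)
  have "vec_space.rank n C = n" using assms(4) unfolding controllable_def C_def .
  then have "det C \<noteq> 0" using vec_space.det_rank_iff[OF C] by blast
  from det_non_zero_imp_unit[OF C this, of "()"]
  obtain C' where C': "C' \<in> carrier_mat n n" "C * C' = 1\<^sub>m n"
    unfolding Units_def ring_mat_def by auto
  have bnz: "\<beta> \<noteq> 0"
  proof
    assume "\<beta> = 0"
    then have "P * C = 0\<^sub>m 1 n" using PC E by auto
    have "P = P * (C * C')" using C' P by simp
    also have "\<dots> = (P * C) * C'" using P C C' by (simp add: assoc_mult_mat)
    also have "\<dots> = 0\<^sub>m 1 n" using \<open>P * C = 0\<^sub>m 1 n\<close> C' by simp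
    finally have P0: "P = 0\<^sub>m 1 n" .
    have "\<forall>y\<in>carrier_vec 1. \<exists>x\<in>carrier_vec n. P *\<^sub>v x = y"
      using an_prod_surj[OF assms(5) assms(6), of "n-1"] n1 unfolding P_def by simp
    then obtain x where x: "x \<in> carrier_vec n" "P *\<^sub>v x = unit_vec 1 0"
      using unit_vec_carrier by blast
    then have "(P *\<^sub>v x) $ 0 = 1" by simp
    moreover have "(P *\<^sub>v x) $ 0 = 0" using P0 x(1) by (simp add: mult_mat_vec_def scalar_prod_def)
    ultimately show False by simp
  qed
  have main: "E * Ci = (1 / \<beta>) \<cdot>\<^sub>m P" if Ci: "Ci \<in> carrier_mat n n" and inv: "inverts_mat C Ci" for Ci
  proof -
    have CCi: "C * Ci = 1\<^sub>m n" using inv C unfolding inverts_mat_def by simp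
    have "P = P * (C * Ci)" using CCi P by simp
    also have "\<dots> = (P * C) * Ci" using P C Ci by (simp add: assoc_mult_mat)
    also have "\<dots> = \<beta> \<cdot>\<^sub>m (E * Ci)" using PC E Ci by (simp add: mult_smult_assoc_mat)
    finally have "(1 / \<beta>) \<cdot>\<^sub>m P = (1 / \<beta>) \<cdot>\<^sub>m (\<beta> \<cdot>\<^sub>m (E * Ci))" by simp
    also have "\<dots> = E * Ci" using bnz by (intro eq_matI) auto
    finally show ?thesis by simp
  qed
  show ?thesis using Bkc bnz main unfolding \<beta>_def P_def C_def E_def by blast
qed

end
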